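(* Let $a,b,c,d$ be positive integers and let $G=K_{a,b,c,d}$ be the complete 4-partite graph with partite sets of sizes $a,b,c,d$. Then $\mathrm{ppn}(G)=1$ if and only if $a=b=c=d=1$.
   Context: A $k$-prime product distance labeling of a finite graph $G$ (for a positive integer $k$) is an injective map $L:V(G)\to\mathbb{Z}$ such that $|L(u)-L(v)|>1$ for all distinct vertices $u,v$ of $G$, and such that for every pair of adjacent vertices $u,v$ the integer $|L(u)-L(v)|$ has at most $k$ prime factors counted with multiplicity. The prime product number $\mathrm{ppn}(G)$ is the least positive integer $k$ such that $G$ has a $k$-prime product distance labeling. *)

theory Defs
  imports "HOL-Computational_Algebra.Primes"
begin

definition Omega :: "nat \<Rightarrow> nat" where
  "Omega n = size (prime_factorization n)"

text \<open>A finite simple graph is given by a vertex set V and a symmetric,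
  irreflexive adjacency relation E on V.\<close>
definition k_ppd_labeling :: "nat \<Rightarrow> 'v set \<Rightarrow> ('v \<Rightarrow> 'v \<Rightarrow> bool) \<Rightarrow> ('v \<Rightarrow> int) \<Rightarrow> bool" where
  "k_ppd_labeling k V E L \<longleftrightarrow>
     inj_on L V \<and>
     (\<forall>u\<in>V. \<forall>v\<in>V. u \<noteq> v \<longrightarrow> \<bar>L u - L v\<bar> > 1) \<and>
     (\<forall>u\<in>V. \<forall>v\<in>V. E u v \<longrightarrow> Omega (nat \<bar>L u - L v\<bar>) \<le> k)"

definition ppn :: "'v set \<Rightarrow> ('v \<Rightarrow> 'v \<Rightarrow> bool) \<Rightarrow> nat" where
  "ppn V E = (LEAST k. k > 0 \<and> (\<exists>L. k_ppd_labeling k V E L))"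

text \<open>Complete multipartite graph K_{s 0, ..., s (r-1)}: vertex (i,j) is the
  j-th vertex of part i; two vertices are adjacent iff they lie in different parts.\<close>
definition cmp_vertices :: "nat \<Rightarrow> (nat \<Rightarrow> nat) \<Rightarrow> (nat \<times> nat) set" where
  "cmp_vertices r s = {(i, j). i < r \<and> j < s i}"

definition cmp_adj :: "(nat \<times> nat) \<Rightarrow> (nat \<times> nat) \<Rightarrow> bool" where
  "cmp_adj u v \<longleftrightarrow> fst u \<noteq> fst v"

definition K4 :: "nat \<Rightarrow> nat \<Rightarrow> nat \<Rightarrow> nat \<Rightarrow> nat \<Rightarrow> nat" where
  "K4 a b c d i = (if i = 0 then a else if i = 1 then b else if i = 2 then c else d)"

end

theory Submission
  imports Defs "HOL-Library.Countable_Set"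
begin

definition Pd :: "int \<Rightarrow> bool" where
 "Pd d \<longleftrightarrow> d \<ge> 2 \<and> (even d \<longrightarrow> d = 2) \<and> (3 dvd d \<longrightarrow> d = 3)"

lemma Pd_ev: "Pd \<bar>d\<bar> \<Longrightarrow> even d \<Longrightarrow> \<bar>d\<bar> = 2" unfolding Pd_def by auto
lemma Pd_3: "Pd \<bar>d\<bar> \<Longrightarrow> 3 dvd d \<Longrightarrow> \<bar>d\<bar> = 3" unfolding Pd_def by auto
lemma Pd_ge: "Pd d \<Longrightarrow> d \<ge> 2" unfolding Pd_def by auto

lemma L3: assumes "Pd \<bar>a-b\<bar>" "Pd \<bar>a-c\<bar>" "Pd \<bar>b-c\<bar>" "even (a-b)" "even (a-c)"
  shows False
proof -
  have "even (b - c)" using assms(4,5) by simp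
  then have "\<bar>b-c\<bar> = 2" using Pd_ev assms(3) by blast
  moreover have "\<bar>a-b\<bar> = 2" "\<bar>a-c\<bar> = 2" using Pd_ev assms by blast+
  ultimately show False by arith
qed

lemma L4a: assumes "Pd \<bar>t+2\<bar>" "Pd \<bar>t\<bar>" "Pd \<bar>t-2\<bar>" shows "t = 5 \<or> t = -5"
proof -
  have "3 dvd t \<or> 3 dvd (t+2) \<or> 3 dvd (t-2)" by presburger
  moreover have "\<bar>t+2\<bar> \<ge> 2" "\<bar>t\<bar> \<ge> 2" "\<bar>t-2\<bar> \<ge> 2" using assms Pd_ge by blast+
  ultimately show ?thesis using Pd_3 assms by (smt (verit))
qed

lemma L4: assumes "Pd \<bar>t+2\<bar>" "Pd \<bar>t\<bar>" "Pd \<bar>t-2\<bar>" "Pd \<bar>s+2\<bar>" "Pd \<bar>s\<bar>" "Pd \<bar>s-2\<bar>" "\<bar>t-s\<bar> = 2"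
  shows False using L4a[OF assms(1-3)] L4a[OF assms(4-6)] assms(7) by auto
lemma par: "even ((a::int) - b) \<longleftrightarrow> (even a \<longleftrightarrow> even b)" by auto

lemma L3': "Pd \<bar>a-b\<bar> \<Longrightarrow> Pd \<bar>a-c\<bar> \<Longrightarrow> Pd \<bar>b-c\<bar> \<Longrightarrow> \<not> (even a = even b \<and> even a = even c)"
  using L3 par by blast

lemma cfg: assumes "\<bar>x - y\<bar> \<ge> 2" "Pd \<bar>x - z\<bar>" "Pd \<bar>x - u\<bar>" "Pd \<bar>x - w\<bar>"
   "Pd \<bar>y - z\<bar>" "Pd \<bar>y - u\<bar>" "Pd \<bar>y - w\<bar>"
   "Pd \<bar>z - u\<bar>" "Pd \<bar>z - w\<bar>" "Pd \<bar>u - w\<bar>"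
 shows "\<not> (even x = even w \<and> even y = even w \<and> even z = even u)"
proof
  assume pp: "even x = even w \<and> even y = even w \<and> even z = even u"
  have a: "\<bar>x-w\<bar> = 2" "\<bar>y-w\<bar> = 2" "\<bar>z-u\<bar> = 2" using Pd_ev assms pp par by blast+
  then have "(x = w - 2 \<and> y = w + 2) \<or> (x = w + 2 \<and> y = w - 2)" using assms(1) by arith
  then show False
  proof
    assume h: "x = w - 2 \<and> y = w + 2"
    show False
      apply (rule L4[of "w - z" "w - u"])
      using assms h a by (auto simp: abs_minus_commute algebra_simps)
  next
    assume h: "x = w + 2 \<and> y = w - 2"
    show False
      apply (rule L4[of "w - z" "w - u"])
      using assms h a by (auto simp: abs_minus_commute algebra_simps)
  qed
qed

lemma five:
  fixes x y z u w :: int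
  assumes "\<bar>x - y\<bar> \<ge> 2"
   "Pd \<bar>x - z\<bar>" "Pd \<bar>x - u\<bar>" "Pd \<bar>x - w\<bar>"
   "Pd \<bar>y - z\<bar>" "Pd \<bar>y - u\<bar>" "Pd \<bar>y - w\<bar>"
   "Pd \<bar>z - u\<bar>" "Pd \<bar>z - w\<bar>" "Pd \<bar>u - w\<bar>"
  shows False
proof -
  have s: "Pd \<bar>u - z\<bar>" "Pd \<bar>w - z\<bar>" "Pd \<bar>w - u\<bar>" using assms by (simp_all add: abs_minus_commute)
  have t1: "\<not> (even z = even u \<and> even z = even w)" by (rule L3') (use assms in auto)
  have t2: "\<not> (even x = even z \<and> even x = even u)" by (rule L3') (use assms in auto)
  have t3: "\<not> (even x = even z \<and> even x = even w)" by (rule L3') (use assms in auto)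
  have t4: "\<not> (even x = even u \<and> even x = even w)" by (rule L3') (use assms in auto)
  have t5: "\<not> (even y = even z \<and> even y = even u)" by (rule L3') (use assms in auto)
  have t6: "\<not> (even y = even z \<and> even y = even w)" by (rule L3') (use assms in auto)
  have t7: "\<not> (even y = even u \<and> even y = even w)" by (rule L3') (use assms in auto)
  have c1: "\<not> (even x = even w \<and> even y = even w \<and> even z = even u)" by (rule cfg) (use assms s in auto)
  have c2: "\<not> (even x = even u \<and> even y = even u \<and> even z = even w)" by (rule cfg) (use assms s in auto)
  have c3: "\<not> (even x = even z \<and> even y = even z \<and> even u = even w)" by (rule cfg) (use assms s in auto)
  show False using t1 t2 t3 t4 t5 t6 t7 c1 c2 c3 by argo
qed

lemma Omega_prime: "n \<ge> 2 \<Longrightarrow> Omega n \<le> 1 \<Longrightarrow> prime n"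
proof -
  assume n: "n \<ge> 2" "Omega n \<le> 1"
  have pr: "prod_mset (prime_factorization n) = n" using n by simp
  show "prime n"
  proof (cases "size (prime_factorization n)")
    case 0
    then have "prime_factorization n = {#}" by simp
    with pr n show ?thesis by simp
  next
    case (Suc m)
    with n have "size (prime_factorization n) = 1" unfolding Omega_def by simp
    then obtain p where p: "prime_factorization n = {#p#}" by (metis size_1_singleton_mset)
    then have "p \<in> prime_factors n" by simp
    then have "prime p" by blast
    with pr p show ?thesis by simp
  qed
qed

lemma Omega_of_prime: "prime p \<Longrightarrow> Omega p = 1"
  unfolding Omega_def by (simp add: prime_factorization_prime)

lemma prime_Pd: assumes "prime (n::nat)" shows "Pd (int n)"
proof -
  have "n \<ge> 2" using assms prime_ge_2_nat by blast
  moreover have "even (int n) \<longrightarrow> int n = 2"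
    using primes_dvd_imp_eq[OF two_is_prime_nat assms] by auto
  moreover have "3 dvd (int n) \<longrightarrow> int n = 3"
  proof
    assume "3 dvd int n"
    then have "(3::nat) dvd n" by presburger
    moreover have "prime (3::nat)" unfolding prime_nat_iff' by (simp add: atLeastLessThan_nat_numeral)
    ultimately show "int n = 3" using primes_dvd_imp_eq[of 3 n] assms by simp
  qed
  ultimately show ?thesis unfolding Pd_def by auto
qed

lemma lab_Pd: assumes "k_ppd_labeling 1 V E L" "u \<in> V" "v \<in> V" "E u v" "u \<noteq> v"
  shows "Pd \<bar>L u - L v\<bar>"
proof -
  have g: "\<bar>L u - L v\<bar> > 1" and o: "Omega (nat \<bar>L u - L v\<bar>) \<le> 1"
    using assms unfolding k_ppd_labeling_def by auto
  have "prime (nat \<bar>L u - L v\<bar>)" using g o by (intro Omega_prime) auto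
  from prime_Pd[OF this] show ?thesis using g by simp
qed

lemma cmp_fin: "finite (cmp_vertices r s)"
proof -
  have "cmp_vertices r s = Sigma {..<r} (\<lambda>i. {..<s i})" unfolding cmp_vertices_def by auto
  then show ?thesis by simp
qed

lemma exists_lab: assumes "finite V" shows "\<exists>k L. k > 0 \<and> k_ppd_labeling k V E L"
proof -
  define L :: "'a \<Rightarrow> int" where "L = (\<lambda>v. 2 * int (to_nat_on V v))"
  have inj: "inj_on (to_nat_on V) V" using assms by (simp add: inj_on_to_nat_on countable_finite)
  define k where "k = Suc (Max ((\<lambda>(u,v). Omega (nat \<bar>L u - L v\<bar>)) ` (V \<times> V)))"
  have "k_ppd_labeling k V E L"
    unfolding k_ppd_labeling_def
  proof (intro conjI ballI impI)
    show "inj_on L V" using inj unfolding L_def inj_on_def by auto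
  next
    fix u v assume "u \<in> V" "v \<in> V" "u \<noteq> v"
    then have "to_nat_on V u \<noteq> to_nat_on V v" using inj inj_on_def by metis
    then show "\<bar>L u - L v\<bar> > 1" unfolding L_def by arith
  next
    fix u v assume uv: "u \<in> V" "v \<in> V"
    have "Omega (nat \<bar>L u - L v\<bar>) \<le> Max ((\<lambda>(u,v). Omega (nat \<bar>L u - L v\<bar>)) ` (V \<times> V))"
      by (rule Max_ge) (use assms uv in auto)
    then show "Omega (nat \<bar>L u - L v\<bar>) \<le> k" unfolding k_def by simp
  qed
  then show ?thesis unfolding k_def by blast
qed

lemma big_part_false:
  assumes lab: "k_ppd_labeling 1 (cmp_vertices 4 s) cmp_adj L"
    and pos: "\<And>i. i < 4 \<Longrightarrow> s i > 0" and i: "i < 4" "s i \<ge> 2"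
  shows False
proof -
  obtain j1 j2 j3 where j: "j1 < 4" "j2 < 4" "j3 < 4" "j1 \<noteq> i" "j2 \<noteq> i" "j3 \<noteq> i"
     "j1 \<noteq> j2" "j1 \<noteq> j3" "j2 \<noteq> j3"
  proof -
    have "i = 0 \<or> i = 1 \<or> i = 2 \<or> i = 3" using i by auto
    then show ?thesis
    proof (elim disjE)
      assume "i = 0" then show ?thesis using that[of 1 2 3] by auto
    next
      assume "i = 1" then show ?thesis using that[of 0 2 3] by auto
    next
      assume "i = 2" then show ?thesis using that[of 0 1 3] by auto
    next
      assume "i = 3" then show ?thesis using that[of 0 1 2] by auto
    qed
  qed
  let ?V = "cmp_vertices 4 s"
  have m: "(i,0) \<in> ?V" "(i,1) \<in> ?V" "(j1,0) \<in> ?V" "(j2,0) \<in> ?V" "(j3,0) \<in> ?V"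
    using i j pos unfolding cmp_vertices_def by auto
  have d: "\<bar>L (i,0) - L (i,1)\<bar> > 1" using lab m unfolding k_ppd_labeling_def by auto
  have P: "\<And>u v. u \<in> ?V \<Longrightarrow> v \<in> ?V \<Longrightarrow> fst u \<noteq> fst v \<Longrightarrow> Pd \<bar>L u - L v\<bar>"
  proof -
    fix u v assume "u \<in> ?V" "v \<in> ?V" "fst u \<noteq> fst v"
    then show "Pd \<bar>L u - L v\<bar>" by (intro lab_Pd[OF lab]) (auto simp: cmp_adj_def)
  qed
  show False
    apply (rule five[of "L (i,0)" "L (i,1)" "L (j1,0)" "L (j2,0)" "L (j3,0)"])
    using d apply simp
    apply (rule P; use m j in simp)+
    done
qed

theorem mainTheorem8:
  fixes a b c d :: nat
  assumes "a > 0" "b > 0" "c > 0" "d > 0"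
  shows "ppn (cmp_vertices 4 (K4 a b c d)) cmp_adj = 1 \<longleftrightarrow> a = 1 \<and> b = 1 \<and> c = 1 \<and> d = 1"
proof
  let ?s = "K4 a b c d"
  let ?V = "cmp_vertices 4 ?s"
  have pos: "\<And>i. i < 4 \<Longrightarrow> ?s i > 0" using assms unfolding K4_def by auto
  assume h: "ppn ?V cmp_adj = 1"
  obtain k L where "k > 0 \<and> k_ppd_labeling k ?V cmp_adj L" using exists_lab[OF cmp_fin] by blast
  then have "\<exists>k. k > 0 \<and> (\<exists>L. k_ppd_labeling k ?V cmp_adj L)" by blast
  from LeastI_ex[OF this] h obtain L where lab: "k_ppd_labeling 1 ?V cmp_adj L"
    unfolding ppn_def by auto
  show "a = 1 \<and> b = 1 \<and> c = 1 \<and> d = 1"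
  proof (rule ccontr)
    assume "\<not> ?thesis"
    then have "a \<ge> 2 \<or> b \<ge> 2 \<or> c \<ge> 2 \<or> d \<ge> 2" using assms by auto
    then show False
    proof (elim disjE)
      assume "a \<ge> 2" then show False using big_part_false[OF lab pos, of 0] by (simp add: K4_def)
    next
      assume "b \<ge> 2" then show False using big_part_false[OF lab pos, of 1] by (simp add: K4_def)
    next
      assume "c \<ge> 2" then show False using big_part_false[OF lab pos, of 2] by (simp add: K4_def)
    next
      assume "d \<ge> 2" then show False using big_part_false[OF lab pos, of 3] by (simp add: K4_def)
    qed
  qed
next
  assume h: "a = 1 \<and> b = 1 \<and> c = 1 \<and> d = 1"
  let ?V = "cmp_vertices 4 (K4 a b c d)"
  have K: "K4 a b c d = (\<lambda>i. 1)" using h by (auto simp: K4_def fun_eq_iff)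
  have V: "?V = {(0,0),(1,0),(2,0),(3,0)}"
    unfolding cmp_vertices_def K by (auto simp: eval_nat_numeral less_Suc_eq)
  define L :: "nat \<times> nat \<Rightarrow> int" where
    "L = (\<lambda>(i,j). if i = 0 then 0 else if i = 1 then 2 else if i = 2 then 5 else 7)"
  have p: "prime (2::nat)" "prime (3::nat)" "prime (5::nat)" "prime (7::nat)"
    unfolding prime_nat_iff' by (simp_all add: atLeastLessThan_nat_numeral)
  have o: "Omega 2 = 1" "Omega 3 = 1" "Omega 5 = 1" "Omega 7 = 1"
    using p Omega_of_prime by blast+
  have lab: "k_ppd_labeling 1 ?V cmp_adj L"
    unfolding k_ppd_labeling_def V L_def inj_on_def cmp_adj_def using o by auto
  show "ppn ?V cmp_adj = 1"
    unfolding ppn_def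
    by (rule Least_equality) (use lab in auto)
qed

end
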